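(* Let $0\le\alpha\le1$ and define $\delta(X,Y)=\alpha\, m(X,Y)+(1-\alpha)M(X,Y)$ for finite sets $X,Y$. Then $\delta$ satisfies the triangle inequality $\delta(X,Y)\le\delta(X,Z)+\delta(Z,Y)$ for all finite subsets $X,Y,Z$ of $\mathbb N$ if and only if $\alpha\le\tfrac12$.
   Context: For finite sets $X,Y$ let $m(X,Y)=\min\{|X\setminus Y|,|Y\setminus X|\}$ and $M(X,Y)=\max\{|X\setminus Y|,|Y\setminus X|\}$. *)

theory Defs
  imports Main "HOL.Real"
begin

definition m_dist :: "'a set \<Rightarrow> 'a set \<Rightarrow> nat" where
  "m_dist X Y = min (card (X - Y)) (card (Y - X))"

definition M_dist :: "'a set \<Rightarrow> 'a set \<Rightarrow> nat" where
  "M_dist X Y = max (card (X - Y)) (card (Y - X))"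

definition delta :: "real \<Rightarrow> 'a set \<Rightarrow> 'a set \<Rightarrow> real" where
  "delta \<alpha> X Y = \<alpha> * real (m_dist X Y) + (1 - \<alpha>) * real (M_dist X Y)"

end

theory Submission
  imports Defs
begin

lemma card_diff_tri:
  fixes X Y Z :: "'a set"
  assumes "finite X" "finite Z"
  shows "card (X - Y) \<le> card (X - Z) + card (Z - Y)"
proof -
  have "X - Y \<subseteq> (X - Z) \<union> (Z - Y)" by blast
  hence "card (X - Y) \<le> card ((X - Z) \<union> (Z - Y))"
    by (intro card_mono) (use assms in auto)
  also have "\<dots> \<le> card (X - Z) + card (Z - Y)" by (rule card_Un_le)
  finally show ?thesis .
qed

lemma delta_alt: "delta \<alpha> X Y = \<alpha> * (real (card (X - Y)) + real (card (Y - X)))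
   + (1 - 2*\<alpha>) * real (M_dist X Y)"
proof (cases "card (X - Y) \<le> card (Y - X)")
  case True
  then have "m_dist X Y = card (X - Y)" "M_dist X Y = card (Y - X)"
    unfolding m_dist_def M_dist_def by auto
  then show ?thesis unfolding delta_def by (simp add: algebra_simps)
next
  case False
  then have "m_dist X Y = card (Y - X)" "M_dist X Y = card (X - Y)"
    unfolding m_dist_def M_dist_def by auto
  then show ?thesis unfolding delta_def by (simp add: algebra_simps)
qed

theorem mainTheorem7:
  fixes \<alpha> :: real
  assumes "0 \<le> \<alpha>" and "\<alpha> \<le> 1"
  shows "(\<forall>X Y Z :: nat set. finite X \<longrightarrow> finite Y \<longrightarrow> finite Z \<longrightarrow>
            delta \<alpha> X Y \<le> delta \<alpha> X Z + delta \<alpha> Z Y) \<longleftrightarrow> \<alpha> \<le> 1/2"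
proof
  assume H: "\<forall>X Y Z :: nat set. finite X \<longrightarrow> finite Y \<longrightarrow> finite Z \<longrightarrow>
            delta \<alpha> X Y \<le> delta \<alpha> X Z + delta \<alpha> Z Y"
  have h: "delta \<alpha> {0::nat} {2::nat} \<le> delta \<alpha> {0::nat} {0::nat,2} + delta \<alpha> {0::nat,2} {2::nat}"
    using H[rule_format, of "{0::nat}" "{2::nat}" "{0::nat,2}"] by simp
  have e: "({0::nat} - {2::nat}) = {0}" "({2::nat} - {0}) = {2::nat}"
    "({0::nat} - {0::nat,2}) = {}" "({0::nat,2} - {0}) = {2::nat}"
    "({0::nat,2} - {2::nat}) = {0}" "({2::nat} - {0::nat,2}) = {}" by auto
  have d: "m_dist {0::nat} {2::nat} = 1" "M_dist {0::nat} {2::nat} = 1"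
    "m_dist {0::nat} {0::nat,2} = 0" "M_dist {0::nat} {0::nat,2} = 1"
    "m_dist {0::nat,2} {2::nat} = 0" "M_dist {0::nat,2} {2::nat} = 1"
    unfolding m_dist_def M_dist_def e by simp_all
  have "1 \<le> 2 * (1 - \<alpha>)"
    using h unfolding delta_def d by (simp add: algebra_simps)
  thus "\<alpha> \<le> 1/2" by simp
next
  assume a: "\<alpha> \<le> 1/2"
  show "\<forall>X Y Z :: nat set. finite X \<longrightarrow> finite Y \<longrightarrow> finite Z \<longrightarrow>
            delta \<alpha> X Y \<le> delta \<alpha> X Z + delta \<alpha> Z Y"
  proof (intro allI impI)
    fix X Y Z :: "nat set"
    assume f: "finite X" "finite Y" "finite Z"
    have t1: "card (X - Y) \<le> card (X - Z) + card (Z - Y)" using f card_diff_tri by blast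
    have t2: "card (Y - X) \<le> card (Y - Z) + card (Z - X)" using f card_diff_tri by blast
    have M: "M_dist X Y \<le> M_dist X Z + M_dist Z Y"
      using t1 t2 unfolding M_dist_def by auto
    have S: "real (card (X - Y)) + real (card (Y - X)) \<le>
      (real (card (X - Z)) + real (card (Z - X))) + (real (card (Z - Y)) + real (card (Y - Z)))"
      using t1 t2 by linarith
    have 1: "\<alpha> * (real (card (X - Y)) + real (card (Y - X))) \<le>
      \<alpha> * ((real (card (X - Z)) + real (card (Z - X))) + (real (card (Z - Y)) + real (card (Y - Z))))"
      using S assms(1) by (rule mult_left_mono)
    have 2: "(1 - 2*\<alpha>) * real (M_dist X Y) \<le> (1 - 2*\<alpha>) * (real (M_dist X Z) + real (M_dist Z Y))"
      using M a by (intro mult_left_mono) auto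
    show "delta \<alpha> X Y \<le> delta \<alpha> X Z + delta \<alpha> Z Y"
      unfolding delta_alt using 1 2 by (simp add: algebra_simps)
  qed
qed

end
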